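(* Let $\mathcal{A}$ be a complex Banach algebra with unity, $a,b\in\mathcal{A}$ and $k$ a positive integer. Suppose $ab\alpha_{1}\alpha_{2}\cdots\alpha_{k}=0$ for all $\alpha_{1},\dots,\alpha_{k}\in\{a,b\}$. Then $a,b\in\mathcal{A}^{qnil}$ if and only if $a+b\in\mathcal{A}^{qnil}$.
   Context: $\mathcal{A}^{qnil}$ denotes the set of quasinilpotent elements of $\mathcal{A}$, i.e. elements whose spectrum is $\{0\}$. *)

theory Defs
  imports "HOL-Analysis.Analysis"
begin

text \<open>HOL has no class of complex normed algebras, so we introduce one:
  a complex vector space structure compatible with the real one.\<close>

class scaleC =
  fixes scaleC :: "complex \<Rightarrow> 'a \<Rightarrow> 'a" (infixr \<open>*\<^sub>C\<close> 75)

class complex_banach_algebra_1 = scaleC + real_normed_algebra_1 + banach +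
  assumes scaleC_add_right: "c *\<^sub>C (x + y) = c *\<^sub>C x + c *\<^sub>C y"
    and scaleC_add_left: "(c + d) *\<^sub>C x = c *\<^sub>C x + d *\<^sub>C x"
    and scaleC_scaleC: "c *\<^sub>C (d *\<^sub>C x) = (c * d) *\<^sub>C x"
    and scaleC_one: "(1::complex) *\<^sub>C x = x"
    and scaleR_scaleC: "scaleR r x = complex_of_real r *\<^sub>C x"
    and mult_scaleC_left: "(c *\<^sub>C x) * y = c *\<^sub>C (x * y)"
    and mult_scaleC_right: "x * (c *\<^sub>C y) = c *\<^sub>C (x * y)"
    and norm_scaleC: "norm (c *\<^sub>C x) = cmod c * norm x"

definition invertible_elem :: "'a::ring_1 \<Rightarrow> bool" where
  "invertible_elem x \<longleftrightarrow> (\<exists>y. x * y = 1 \<and> y * x = 1)"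

definition spectrum :: "'a::complex_banach_algebra_1 \<Rightarrow> complex set" where
  "spectrum a = {z. \<not> invertible_elem (z *\<^sub>C 1 - a)}"

definition quasinilpotent :: "'a::complex_banach_algebra_1 \<Rightarrow> bool" where
  "quasinilpotent a \<longleftrightarrow> spectrum a = {0}"

end

theory Submission
  imports Defs
begin


lemma scaleC_zero_right [simp]: "c *\<^sub>C (0::'a::complex_banach_algebra_1) = 0"
  using scaleC_add_right[of c "0::'a" 0] by simp

lemma scaleC_zero_left [simp]: "(0::complex) *\<^sub>C (x::'a::complex_banach_algebra_1) = 0"
  using scaleC_add_left[of 0 0 x] by simp

definition cs :: "complex \<Rightarrow> 'a::complex_banach_algebra_1" where "cs c = c *\<^sub>C 1"

lemma scaleC_cs: "c *\<^sub>C (x::'a::complex_banach_algebra_1) = cs c * x"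
  unfolding cs_def by (simp add: mult_scaleC_left)

lemma cs_comm: "cs c * (x::'a::complex_banach_algebra_1) = x * cs c"
  unfolding cs_def by (simp add: mult_scaleC_left mult_scaleC_right)

lemma cs_comm_assoc: "(x::'a::complex_banach_algebra_1) * (cs c * z) = cs c * (x * z)"
  unfolding cs_def by (simp add: mult_scaleC_left mult_scaleC_right)

lemma cs_add: "(cs (c + d)::'a::complex_banach_algebra_1) = cs c + cs d"
  unfolding cs_def by (simp add: scaleC_add_left)

lemma cs_zero [simp]: "(cs 0::'a::complex_banach_algebra_1) = 0"
  unfolding cs_def by simp

lemma cs_one [simp]: "(cs 1::'a::complex_banach_algebra_1) = 1"
  unfolding cs_def by (simp add: scaleC_one)

lemma cs_mult: "(cs (c * d)::'a::complex_banach_algebra_1) = cs c * cs d"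
  unfolding cs_def by (simp add: mult_scaleC_left scaleC_scaleC)

lemma cs_minus: "(cs (- c)::'a::complex_banach_algebra_1) = - cs c"
proof -
  have "(cs c::'a) + cs (- c) = 0" using cs_add[of c "-c"] by simp
  then show ?thesis by (rule minus_unique[symmetric])
qed

lemma cs_diff: "(cs (c - d)::'a::complex_banach_algebra_1) = cs c - cs d"
  using cs_add[of c "-d"] by (simp add: cs_minus)

lemma norm_cs [simp]: "norm (cs c::'a::complex_banach_algebra_1) = cmod c"
  unfolding cs_def by (simp add: norm_scaleC)

lemma cs_power: "(cs (c ^ n)::'a::complex_banach_algebra_1) = cs c ^ n"
  by (induction n) (simp_all add: cs_mult)

lemma cs_sum: "(cs (sum f A)::'a::complex_banach_algebra_1) = sum (\<lambda>i. cs (f i)) A"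
  by (induction A rule: infinite_finite_induct) (simp_all add: cs_add)

lemma cs_of_real: "(cs (complex_of_real r)::'a::complex_banach_algebra_1) = of_real r"
proof -
  have "of_real r = (r *\<^sub>R (1::'a))" by (simp add: of_real_def)
  then show ?thesis unfolding cs_def using scaleR_scaleC[of r "1::'a"] by simp
qed

lemma cs_of_nat: "(cs (of_nat n)::'a::complex_banach_algebra_1) = of_nat n"
  using cs_of_real[of "real n", where 'a='a] by simp



lemma inv_one [simp]: "invertible_elem (1::'a::ring_1)"
  unfolding invertible_elem_def by auto

lemma inv_mult: "invertible_elem (x::'a::ring_1) \<Longrightarrow> invertible_elem y \<Longrightarrow> invertible_elem (x * y)"
  unfolding invertible_elem_def
proof (elim exE conjE)
  fix x' y' assume h: "x * x' = 1" "x' * x = 1" "y * y' = 1" "y' * y = 1"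
  have "x * y * (y' * x') = x * (y * y') * x'" by (simp add: mult.assoc)
  moreover have "y' * x' * (x * y) = y' * (x' * x) * y" by (simp add: mult.assoc)
  ultimately show "\<exists>z. x * y * z = 1 \<and> z * (x * y) = 1" using h by auto
qed

lemma inv_cancel_left:
  assumes "invertible_elem (x::'a::ring_1)" "invertible_elem (x * y)" shows "invertible_elem y"
proof -
  obtain x' where x': "x * x' = 1" "x' * x = 1" using assms(1) unfolding invertible_elem_def by auto
  have "y = x' * (x * y)" using x' by (simp add: mult.assoc[symmetric])
  moreover have "invertible_elem x'" using x' unfolding invertible_elem_def by auto
  ultimately show ?thesis using inv_mult assms(2) by metis
qed

lemma inv_cancel_right:
  assumes "invertible_elem (y::'a::ring_1)" "invertible_elem (x * y)" shows "invertible_elem x"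
proof -
  obtain y' where y': "y * y' = 1" "y' * y = 1" using assms(1) unfolding invertible_elem_def by auto
  have "x = (x * y) * y'" using y' by (simp add: mult.assoc)
  moreover have "invertible_elem y'" using y' unfolding invertible_elem_def by auto
  ultimately show ?thesis using inv_mult assms(2) by metis
qed

lemma inv_uminus: "invertible_elem (- (x::'a::ring_1)) \<longleftrightarrow> invertible_elem x"
  unfolding invertible_elem_def
  by (metis minus_minus mult_minus_left mult_minus_right)

lemma inv_cs: "c \<noteq> 0 \<Longrightarrow> invertible_elem (cs c::'a::complex_banach_algebra_1)"
  unfolding invertible_elem_def
  by (rule exI[of _ "cs (1/c)"]) (simp add: cs_mult[symmetric])

definition ainv :: "'a::ring_1 \<Rightarrow> 'a" where "ainv x = (SOME y. x * y = 1 \<and> y * x = 1)"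

lemma ainv: assumes "invertible_elem x" shows "x * ainv x = 1" "ainv x * x = 1"
  using someI_ex[OF assms[unfolded invertible_elem_def]] unfolding ainv_def by auto

lemma inverse_unique: "(x::'a::ring_1) * y = 1 \<Longrightarrow> z * x = 1 \<Longrightarrow> y = z"
  by (metis mult.assoc mult_1_left mult_1_right)

lemma ainv_eq: "(x::'a::ring_1) * y = 1 \<Longrightarrow> y * x = 1 \<Longrightarrow> ainv x = y"
  by (metis ainv(2) inverse_unique invertible_elem_def)

lemma quasinilpotent_iff:
  fixes x :: "'a::complex_banach_algebra_1"
  shows "quasinilpotent x \<longleftrightarrow> \<not> invertible_elem x \<and> (\<forall>\<mu>. invertible_elem (1 - cs \<mu> * x))"
proof -
  have eq: "z *\<^sub>C 1 - x = cs z * (1 - cs (1/z) * x)" if "z \<noteq> 0" for z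
  proof -
    have "cs z * (1 - cs (1/z) * x) = cs z - cs z * cs (1/z) * x"
      by (simp add: right_diff_distrib mult.assoc)
    also have "cs z * cs (1/z) = (1::'a)" using that by (simp add: cs_mult[symmetric])
    also have "cs z - 1 * x = z *\<^sub>C 1 - x" by (simp add: cs_def)
    finally show ?thesis by simp
  qed
  have A: "invertible_elem (z *\<^sub>C 1 - x) \<longleftrightarrow> invertible_elem (1 - cs (1/z) * x)" if "z \<noteq> 0" for z
    using eq[OF that] inv_cs[OF that, where 'a='a] inv_mult inv_cancel_left by metis
  have B: "invertible_elem (0 *\<^sub>C 1 - x) \<longleftrightarrow> invertible_elem x"
    by (simp add: inv_uminus)
  show ?thesis
  proof
    assume q: "quasinilpotent x"
    hence s: "\<And>z. \<not> invertible_elem (z *\<^sub>C 1 - x) \<longleftrightarrow> z = 0"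
      unfolding quasinilpotent_def spectrum_def by blast
    have "\<not> invertible_elem x" using s[of 0] B by simp
    moreover have "invertible_elem (1 - cs \<mu> * x)" for \<mu>
    proof (cases "\<mu> = 0")
      case True then show ?thesis by simp
    next
      case False
      hence "1/\<mu> \<noteq> 0" by simp
      then show ?thesis using A[of "1/\<mu>"] s[of "1/\<mu>"] by simp
    qed
    ultimately show "\<not> invertible_elem x \<and> (\<forall>\<mu>. invertible_elem (1 - cs \<mu> * x))" by blast
  next
    assume h: "\<not> invertible_elem x \<and> (\<forall>\<mu>. invertible_elem (1 - cs \<mu> * x))"
    have "\<not> invertible_elem (z *\<^sub>C 1 - x) \<longleftrightarrow> z = 0" for z
    proof (cases "z = 0")
      case True then show ?thesis using h B by simp
    next
      case False then show ?thesis using A[OF False] h by simp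
    qed
    then show "quasinilpotent x" unfolding quasinilpotent_def spectrum_def by blast
  qed
qed

lemma neumann:
  fixes h :: "'a::complex_banach_algebra_1"
  assumes "norm h < 1"
  shows "invertible_elem (1 - h)" "norm (ainv (1 - h) - 1) \<le> norm h / (1 - norm h)"
proof -
  define S where "S = suminf (\<lambda>n. h ^ n)"
  have sm: "summable (\<lambda>n. h ^ n)" using complete_algebra_summable_geometric[OF assms] .
  have sm1: "summable (\<lambda>n. h ^ Suc n)" using sm summable_ignore_initial_segment[of _ 1] by fastforce
  have tail: "(\<Sum>n. h ^ Suc n) = S - 1" unfolding S_def using suminf_split_head[OF sm] by simp
  have "h * S = (\<Sum>n. h ^ Suc n)" unfolding S_def using suminf_mult[OF sm, of h] by simp
  hence l: "(1 - h) * S = 1" using tail by (simp add: left_diff_distrib)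
  have "S * h = (\<Sum>n. h ^ Suc n)" unfolding S_def using suminf_mult2[OF sm, of h]
    by (simp add: power_Suc2[symmetric] del: power_Suc)
  hence r: "S * (1 - h) = 1" using tail by (simp add: right_diff_distrib)
  show i: "invertible_elem (1 - h)" unfolding invertible_elem_def using l r by auto
  have ai: "ainv (1 - h) = S" using ainv_eq[OF l r] .
  have g: "(\<lambda>n. norm h ^ n) sums (1 / (1 - norm h))"
    using geometric_sums[of "norm h"] assms by simp
  have g1: "(\<lambda>n. norm h ^ Suc n) sums (norm h * (1 / (1 - norm h)))"
    using sums_mult[OF g, of "norm h"] by simp
  have b: "norm (norm (h ^ Suc n)) \<le> norm h ^ Suc n" for n
    using norm_power_ineq[of h "Suc n"] by simp
  have sn: "summable (\<lambda>n. norm (h ^ Suc n))"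
    by (rule summable_comparison_test[OF _ sums_summable[OF g1]]) (use b in auto)
  have "norm (S - 1) = norm (\<Sum>n. h ^ Suc n)" using tail by simp
  also have "\<dots> \<le> (\<Sum>n. norm (h ^ Suc n))" by (rule summable_norm[OF sn])
  also have "\<dots> \<le> (\<Sum>n. norm h ^ Suc n)"
    by (rule suminf_le) (use b sn sums_summable[OF g1] in auto)
  also have "\<dots> = norm h / (1 - norm h)" using sums_unique[OF g1] by simp
  finally show "norm (ainv (1 - h) - 1) \<le> norm h / (1 - norm h)" using ai by simp
qed

lemma inv_near_one:
  fixes w :: "'a::complex_banach_algebra_1"
  assumes "norm (1 - w) < 1" shows "invertible_elem w"
  using neumann(1)[OF assms] by simp


lemma norm_small:
  fixes z x :: "'a::complex_banach_algebra_1"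
  assumes "cmod d < 1 / (norm z * norm x + 1)"
  shows "norm (z * (cs d * x)) < 1" "norm (cs d * (z * x)) < 1"
proof -
  have p: "norm z * norm x \<ge> 0" by simp
  have "norm (z * (cs d * x)) \<le> norm z * (cmod d * norm x)"
    by (metis norm_cs mult_left_mono norm_ge_zero norm_mult_ineq order_trans)
  also have "\<dots> = cmod d * (norm z * norm x)" by simp
  also have "\<dots> \<le> (1 / (norm z * norm x + 1)) * (norm z * norm x)"
    using assms p by (intro mult_right_mono) auto
  also have "\<dots> < 1" using p by (simp add: divide_less_eq not_less)
  finally show "norm (z * (cs d * x)) < 1" .
  have "norm (cs d * (z * x)) \<le> cmod d * (norm z * norm x)"
    by (metis norm_cs mult_left_mono norm_ge_zero norm_mult_ineq order_trans)
  also have "\<dots> \<le> (1 / (norm z * norm x + 1)) * (norm z * norm x)"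
    using assms p by (intro mult_right_mono) auto
  also have "\<dots> < 1" using p by (simp add: divide_less_eq not_less)
  finally show "norm (cs d * (z * x)) < 1" .
qed

lemma one_sided_all_inv:
  fixes x :: "'a::complex_banach_algebra_1"
  assumes H: "\<forall>\<mu>. \<exists>y. (1 - cs \<mu> * x) * y = 1 \<or> y * (1 - cs \<mu> * x) = 1"
  shows "invertible_elem (1 - cs \<mu> * x)"
proof -
  define U where "U = {\<mu>. invertible_elem (1 - cs \<mu> * x)}"
  have dec: "1 - cs \<mu>' * x = (1 - cs \<mu> * x) - cs (\<mu>' - \<mu>) * x" for \<mu> \<mu>'
    by (simp add: cs_diff algebra_simps)
  have "open U"
    unfolding open_dist
  proof
    fix \<mu> assume "\<mu> \<in> U"
    hence iv: "invertible_elem (1 - cs \<mu> * x)" unfolding U_def by simp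
    define z where "z = ainv (1 - cs \<mu> * x)"
    have z: "(1 - cs \<mu> * x) * z = 1" using ainv[OF iv] z_def by simp
    show "\<exists>e>0. \<forall>\<mu>'. dist \<mu>' \<mu> < e \<longrightarrow> \<mu>' \<in> U"
    proof (intro exI conjI allI impI)
      show "1 / (norm z * norm x + 1) > 0" by (simp add: add_nonneg_pos)
      fix \<mu>' assume "dist \<mu>' \<mu> < 1 / (norm z * norm x + 1)"
      hence "norm (z * (cs (\<mu>' - \<mu>) * x)) < 1" using norm_small(1) by (simp add: dist_norm)
      hence i2: "invertible_elem (1 - z * (cs (\<mu>' - \<mu>) * x))" by (rule neumann(1))
      have "(1 - cs \<mu> * x) * (1 - z * (cs (\<mu>' - \<mu>) * x)) = 1 - cs \<mu>' * x"
        unfolding dec[of \<mu>' \<mu>] by (simp add: right_diff_distrib mult.assoc[symmetric] z)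
      then show "\<mu>' \<in> U" unfolding U_def using inv_mult[OF iv i2] by simp
    qed
  qed
  moreover have "open (- U)"
    unfolding open_dist
  proof
    fix \<mu> assume "\<mu> \<in> - U"
    hence niv: "\<not> invertible_elem (1 - cs \<mu> * x)" unfolding U_def by simp
    obtain y where y: "(1 - cs \<mu> * x) * y = 1 \<or> y * (1 - cs \<mu> * x) = 1" using H by blast
    show "\<exists>e>0. \<forall>\<mu>'. dist \<mu>' \<mu> < e \<longrightarrow> \<mu>' \<in> - U"
    proof (intro exI conjI allI impI)
      show "1 / (norm y * norm x + 1) > 0" by (simp add: add_nonneg_pos)
      fix \<mu>' assume d: "dist \<mu>' \<mu> < 1 / (norm y * norm x + 1)"
      show "\<mu>' \<in> - U"
      proof
        assume "\<mu>' \<in> U"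
        hence iv': "invertible_elem (1 - cs \<mu>' * x)" unfolding U_def by simp
        from y show False
        proof
          assume y1: "(1 - cs \<mu> * x) * y = 1"
          have "norm (cs (\<mu>' - \<mu>) * (x * y)) < 1"
            using norm_small(2)[of "\<mu>' - \<mu>" x y] d by (simp add: dist_norm mult.commute)
          hence "invertible_elem (1 - cs (\<mu>' - \<mu>) * (x * y))" by (rule neumann(1))
          moreover have "(1 - cs \<mu>' * x) * y = 1 - cs (\<mu>' - \<mu>) * (x * y)"
            unfolding dec[of \<mu>' \<mu>] using y1 by (simp add: left_diff_distrib mult.assoc)
          ultimately have "invertible_elem y" using inv_cancel_left[OF iv'] by metis
          hence "invertible_elem (1 - cs \<mu> * x)" using inv_cancel_right[of y "1 - cs \<mu> * x"] y1 by simp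
          then show False using niv by simp
        next
          assume y1: "y * (1 - cs \<mu> * x) = 1"
          have "norm (cs (\<mu>' - \<mu>) * (y * x)) < 1"
            using norm_small(2)[of "\<mu>' - \<mu>" y x] d by (simp add: dist_norm)
          hence "invertible_elem (1 - cs (\<mu>' - \<mu>) * (y * x))" by (rule neumann(1))
          moreover have "y * (1 - cs \<mu>' * x) = 1 - cs (\<mu>' - \<mu>) * (y * x)"
            unfolding dec[of \<mu>' \<mu>] using y1
            by (simp add: right_diff_distrib mult.assoc[symmetric] cs_comm[of _ y])
          ultimately have "invertible_elem y" using inv_cancel_right[OF iv'] by metis
          hence "invertible_elem (1 - cs \<mu> * x)" using inv_cancel_left[of y "1 - cs \<mu> * x"] y1 by simp
          then show False using niv by simp
        qed
      qed
    qed
  qed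
  moreover have "0 \<in> U" unfolding U_def by simp
  ultimately have "U = UNIV" using clopen[of U] by (auto simp: closed_def)
  then show ?thesis unfolding U_def by auto
qed


lemma geo_left: "(1 - (x::'a::ring_1)) * (\<Sum>i<n. x ^ i) = 1 - x ^ n"
proof (induction n)
  case (Suc n)
  have "(1 - x) * (\<Sum>i<Suc n. x ^ i) = (1 - x) * (\<Sum>i<n. x ^ i) + (1 - x) * x ^ n"
    by (simp add: distrib_left)
  also have "\<dots> = 1 - x ^ n + (x ^ n - x ^ Suc n)" using Suc by (simp add: left_diff_distrib)
  finally show ?case by simp
qed simp

lemma geo_right: "(\<Sum>i<n. (x::'a::ring_1) ^ i) * (1 - x) = 1 - x ^ n"
proof (induction n)
  case (Suc n)
  have "(\<Sum>i<Suc n. x ^ i) * (1 - x) = (\<Sum>i<n. x ^ i) * (1 - x) + x ^ n * (1 - x)"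
    by (simp add: distrib_right)
  also have "\<dots> = 1 - x ^ n + (x ^ n - x ^ Suc n)" using Suc
    by (simp add: right_diff_distrib power_Suc2 del: power_Suc)
  finally show ?case by simp
qed simp

lemma nil_inv: assumes "(n::'a::ring_1) ^ N = 0" shows "invertible_elem (1 - n)"
  unfolding invertible_elem_def
proof (intro exI conjI)
  show "(1 - n) * (\<Sum>i<N. n ^ i) = 1" using geo_left[of n N] assms by simp
  show "(\<Sum>i<N. n ^ i) * (1 - n) = 1" using geo_right[of n N] assms by simp
qed

lemma nil_inv_plus: assumes "(n::'a::ring_1) ^ N = 0" shows "invertible_elem (1 + n)"
proof -
  have "(- n) ^ N = (- 1) ^ N * n ^ N" by (rule power_minus)
  hence "(- n) ^ N = 0" using assms by simp
  then have "invertible_elem (1 - (- n))" by (rule nil_inv)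
  then show ?thesis by simp
qed

definition GG :: "'a::complex_banach_algebra_1 \<Rightarrow> 'a \<Rightarrow> nat \<Rightarrow> nat \<Rightarrow> 'a \<Rightarrow> bool" where
  "GG a b k j y \<longleftrightarrow> (\<forall>ws. set ws \<subseteq> {a, b} \<longrightarrow> k \<le> length ws + j \<longrightarrow> a * b * prod_list ws * y = 0)"

locale wrd =
  fixes a b :: "'a::complex_banach_algebra_1" and k :: nat
  assumes HL: "\<And>ws. set ws \<subseteq> {a, b} \<Longrightarrow> k \<le> length ws \<Longrightarrow> a * b * prod_list ws = 0"
begin

abbreviation "G \<equiv> GG a b k"

lemma G0: "G 0 y"
  unfolding GG_def using HL by simp

lemma Gk_zero: "G k y \<Longrightarrow> a * b * y = 0"
  unfolding GG_def by (drule spec[of _ "[]"]) simp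

lemma G_mono: "G j y \<Longrightarrow> i \<le> j \<Longrightarrow> G i y"
  unfolding GG_def by fastforce

lemma G_k_any: "G k y \<Longrightarrow> G j y"
  unfolding GG_def by simp

lemma G_add: "G j y \<Longrightarrow> G j z \<Longrightarrow> G j (y + z)"
  unfolding GG_def by (simp add: distrib_left)

lemma G_cs: "G j y \<Longrightarrow> G j (cs c * y)"
  unfolding GG_def by (simp add: cs_comm_assoc)

lemma G_rmult: "G j y \<Longrightarrow> G j (y * z)"
  unfolding GG_def by (simp add: mult.assoc[symmetric])

lemma G_step: "x \<in> {a, b} \<Longrightarrow> G j y \<Longrightarrow> G (Suc j) (x * y)"
  unfolding GG_def
proof (intro allI impI)
  fix ws assume x: "x \<in> {a, b}" and g: "\<forall>ws. set ws \<subseteq> {a, b} \<longrightarrow> k \<le> length ws + j \<longrightarrow> a * b * prod_list ws * y = 0"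
    and s: "set ws \<subseteq> {a, b}" and l: "k \<le> length ws + Suc j"
  have "set (ws @ [x]) \<subseteq> {a, b}" "k \<le> length (ws @ [x]) + j" using x s l by auto
  hence "a * b * prod_list (ws @ [x]) * y = 0" using g by blast
  then show "a * b * prod_list ws * (x * y) = 0" by (simp add: mult.assoc)
qed

lemma G_a: "G j y \<Longrightarrow> G (Suc j) (a * y)" using G_step by simp
lemma G_b: "G j y \<Longrightarrow> G (Suc j) (b * y)" using G_step by simp
lemma G_c: "G j y \<Longrightarrow> G (Suc j) ((a + b) * y)"
  using G_a G_b G_add by (simp add: distrib_right)

lemma G_inv:
  assumes st: "\<And>j y. G j y \<Longrightarrow> G (Suc j) (x * y)"
    and P: "P = 1 + cs \<mu> * (x * P)"
    and gy: "G j y"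
  shows "G j (P * y)"
proof -
  have pw: "G (j + i) (x ^ i * z)" if "G j z" for i j z
    using that by (induction i) (simp_all add: mult.assoc st)
  have top: "G j (x ^ k * z)" for z using pw[OF G0, of k z] G_k_any by simp
  have "G j (x ^ (k - i) * P * y)" if "i \<le> k" for i
    using that
  proof (induction i)
    case 0 then show ?case using top[of "P * y"] by (simp add: mult.assoc)
  next
    case (Suc i)
    define m where "m = k - Suc i"
    have km: "k - i = Suc m" using Suc.prems m_def by simp
    have ih: "G j (x ^ Suc m * P * y)" using Suc km by simp
    have eq: "x ^ m * P * y = x ^ m * y + cs \<mu> * (x ^ Suc m * P * y)"
      by (subst P) (simp add: distrib_left distrib_right cs_comm_assoc mult.assoc power_Suc2 del: power_Suc)
    have gm: "G j (x ^ m * y)" using pw[OF gy, of m] G_mono by fastforce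
    have "G j (x ^ m * P * y)" by (subst eq) (rule G_add[OF gm G_cs[OF ih]])
    then show ?case using m_def by simp
  qed
  from this[of k] show ?thesis by simp
qed

lemma nilp:
  assumes U: "\<And>j y. G j y \<Longrightarrow> G j (U * y)" and V: "\<And>j y. G j y \<Longrightarrow> G j (V * y)"
  shows "(U * a * b * V) ^ Suc k = 0"
proof -
  define T where "T = V * U * a * b"
  have gt: "G (2 * m) (T ^ m)" for m
  proof (induction m)
    case 0 then show ?case using G0 by simp
  next
    case (Suc m)
    have "T ^ Suc m = V * (U * (a * (b * T ^ m)))" by (simp add: T_def mult.assoc)
    moreover have "G (Suc (Suc (2 * m))) (V * (U * (a * (b * T ^ m))))"
      using Suc by (intro V U G_a G_b)
    ultimately show ?case by simp
  qed
  have pe: "(U * a * b * V) ^ Suc m = U * a * b * T ^ m * V" for m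
  proof (induction m)
    case 0 then show ?case by simp
  next
    case (Suc m)
    have "(U * a * b * V) ^ Suc (Suc m) = (U * a * b * V) * (U * a * b * T ^ m * V)"
      using Suc by (simp only: power_Suc)
    also have "\<dots> = U * a * b * (T * T ^ m) * V" by (simp add: T_def mult.assoc)
    finally show ?case by simp
  qed
  have "G k (T ^ k * V)" using gt[of k] G_rmult G_mono by fastforce
  hence "a * b * (T ^ k * V) = 0" by (rule Gk_zero)
  hence z': "a * (b * (T ^ k * V)) = 0" by (simp only: mult.assoc)
  have e: "(U * a * b * V) ^ Suc k = U * (a * (b * (T ^ k * V)))"
    using pe[of k] by (simp only: mult.assoc)
  show ?thesis unfolding e z' by simp
qed

end


lemma hyp_HL:
  fixes a b :: "'a::complex_banach_algebra_1"
  assumes H: "\<forall>\<alpha>::nat \<Rightarrow> 'a. (\<forall>i\<in>{1..k}. \<alpha> i \<in> {a, b}) \<longrightarrow>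
           a * b * (\<Prod>i\<leftarrow>[1..<k+1]. \<alpha> i) = 0"
    and ws: "set ws \<subseteq> {a, b}" "k \<le> length ws"
  shows "a * b * prod_list ws = 0"
proof -
  define u where "u = take k ws"
  define v where "v = drop k ws"
  have lu: "length u = k" using ws u_def by simp
  have su: "set u \<subseteq> {a, b}" using ws u_def by (meson order_trans set_take_subset)
  define \<alpha> where "\<alpha> = (\<lambda>i. u ! (i - 1))"
  have m: "map \<alpha> [1..<k+1] = u"
    by (rule nth_equalityI) (simp_all add: lu \<alpha>_def del: upt_Suc)
  have "\<forall>i\<in>{1..k}. \<alpha> i \<in> {a, b}"
  proof
    fix i assume "i \<in> {1..k}"
    hence "i - 1 < length u" using lu by auto
    then show "\<alpha> i \<in> {a, b}" using su nth_mem unfolding \<alpha>_def by blast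
  qed
  hence "a * b * prod_list u = 0" using H m by (metis (no_types, lifting))
  moreover have "ws = u @ v" using u_def v_def by simp
  ultimately show ?thesis by (simp add: mult.assoc[symmetric])
qed

lemma ainv_expand:
  fixes x :: "'a::complex_banach_algebra_1"
  assumes "invertible_elem (1 - cs \<mu> * x)"
  shows "ainv (1 - cs \<mu> * x) = 1 + cs \<mu> * (x * ainv (1 - cs \<mu> * x))"
proof -
  have "(1 - cs \<mu> * x) * ainv (1 - cs \<mu> * x) = 1" using ainv[OF assms] by simp
  hence "ainv (1 - cs \<mu> * x) - cs \<mu> * (x * ainv (1 - cs \<mu> * x)) = 1"
    by (simp add: left_diff_distrib mult.assoc)
  then show ?thesis by (simp add: algebra_simps)
qed

lemma inv_power: "invertible_elem (x::'a::ring_1) \<Longrightarrow> invertible_elem (x ^ n)"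
  by (induction n) (simp_all add: inv_mult)

lemma zero_right_inv: "(x::'a::ring_1) * y = 0 \<Longrightarrow> invertible_elem y \<Longrightarrow> x = 0"
  by (metis ainv(1) mult.assoc mult_1_right mult_zero_left)

lemma zero_left_inv: "(y::'a::ring_1) * x = 0 \<Longrightarrow> invertible_elem y \<Longrightarrow> x = 0"
  by (metis ainv(2) mult.assoc mult_1_left mult_zero_right)

context wrd
begin

lemma fwd_mu:
  assumes ia: "invertible_elem (1 - cs \<mu> * a)" and ib: "invertible_elem (1 - cs \<mu> * b)"
  shows "invertible_elem (1 - cs \<mu> * (a + b))"
proof -
  define A where "A = 1 - cs \<mu> * a"
  define B where "B = 1 - cs \<mu> * b"
  define P where "P = ainv A"
  define Q where "Q = ainv B"
  have AP: "A * P = 1" using ainv(1)[OF ia] A_def P_def by simp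
  have QB: "Q * B = 1" using ainv(2)[OF ib] B_def Q_def by simp
  have Pe: "P = 1 + cs \<mu> * (a * P)" using ainv_expand[OF ia] A_def P_def by simp
  have Qe: "Q = 1 + cs \<mu> * (b * Q)" using ainv_expand[OF ib] B_def Q_def by simp
  define U where "U = cs (\<mu>^2) * P"
  have GU: "G j (U * y)" if "G j y" for j y
    unfolding U_def mult.assoc by (rule G_cs, rule G_inv[OF _ Pe that]) (rule G_a)
  have GV: "G j (Q * y)" if "G j y" for j y
    by (rule G_inv[OF _ Qe that]) (rule G_b)
  define n where "n = U * a * b * Q"
  have "n ^ Suc k = 0" unfolding n_def by (rule nilp[OF GU GV])
  hence i1: "invertible_elem (1 - n)" by (rule nil_inv)
  have "A * n * B = cs (\<mu>^2) * (A * P * (a * (b * (Q * B))))"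
    unfolding n_def U_def by (simp add: mult.assoc cs_comm_assoc)
  also have "\<dots> = cs (\<mu>^2) * (a * b)" using AP QB by simp
  finally have AnB: "A * n * B = cs (\<mu>^2) * (a * b)" .
  have AB: "A * B = 1 - cs \<mu> * (a + b) + cs (\<mu>^2) * (a * b)"
  proof -
    have e1: "cs \<mu> * a * (cs \<mu> * b) = cs (\<mu>^2) * (a * b)"
      by (simp only: mult.assoc cs_comm_assoc[of a \<mu> b] power2_eq_square cs_mult)
    have "A * B = 1 - cs \<mu> * a - cs \<mu> * b + cs \<mu> * a * (cs \<mu> * b)"
      unfolding A_def B_def by (simp add: left_diff_distrib right_diff_distrib)
    then show ?thesis using e1 by (simp add: distrib_left)
  qed
  have "A * (1 - n) * B = 1 - cs \<mu> * (a + b)"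
    using AB AnB by (simp add: right_diff_distrib left_diff_distrib)
  moreover have "invertible_elem (A * (1 - n) * B)"
    using ia ib i1 unfolding A_def B_def by (intro inv_mult)
  ultimately show ?thesis by simp
qed

lemma bwd_mu:
  assumes ic: "invertible_elem (1 - cs \<mu> * (a + b))"
  shows "\<exists>y. (1 - cs \<mu> * a) * y = 1" "\<exists>y. y * (1 - cs \<mu> * b) = 1"
proof -
  define A where "A = 1 - cs \<mu> * a"
  define B where "B = 1 - cs \<mu> * b"
  define C where "C = 1 - cs \<mu> * (a + b)"
  define R where "R = ainv C"
  have CR: "C * R = 1" using ainv(1)[OF ic] C_def R_def by simp
  have Re: "R = 1 + cs \<mu> * ((a + b) * R)" using ainv_expand[OF ic] C_def R_def by simp
  define U where "U = cs (\<mu>^2) * R"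
  have GU: "G j (U * y)" if "G j y" for j y
    unfolding U_def mult.assoc by (rule G_cs, rule G_inv[OF _ Re that]) (rule G_c)
  have GV: "G j (1 * y)" if "G j y" for j y using that by simp
  define m where "m = U * a * b * 1"
  have "m ^ Suc k = 0" unfolding m_def by (rule nilp[OF GU GV])
  hence i1: "invertible_elem (1 + m)" by (rule nil_inv_plus)
  have CRx: "C * (R * X) = X" for X by (simp add: mult.assoc[symmetric] CR)
  have Cm: "C * m = cs (\<mu>^2) * (a * b)"
    unfolding m_def U_def by (simp add: mult.assoc cs_comm_assoc CRx)
  have AB: "A * B = 1 - cs \<mu> * (a + b) + cs (\<mu>^2) * (a * b)"
  proof -
    have e1: "cs \<mu> * a * (cs \<mu> * b) = cs (\<mu>^2) * (a * b)"
      by (simp only: mult.assoc cs_comm_assoc[of a \<mu> b] power2_eq_square cs_mult)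
    have "A * B = 1 - cs \<mu> * a - cs \<mu> * b + cs \<mu> * a * (cs \<mu> * b)"
      unfolding A_def B_def by (simp add: left_diff_distrib right_diff_distrib)
    then show ?thesis using e1 by (simp add: distrib_left)
  qed
  have "A * B = C * (1 + m)" using AB Cm C_def by (simp add: distrib_left)
  moreover have "invertible_elem (C * (1 + m))" using ic i1 C_def by (simp add: inv_mult)
  ultimately have iAB: "invertible_elem (A * B)" by simp
  define W where "W = ainv (A * B)"
  have "A * (B * W) = 1" using ainv(1)[OF iAB] W_def by (simp add: mult.assoc)
  then show "\<exists>y. (1 - cs \<mu> * a) * y = 1" using A_def by blast
  have "(W * A) * B = 1" using ainv(2)[OF iAB] W_def by (simp add: mult.assoc)
  then show "\<exists>y. y * (1 - cs \<mu> * b) = 1" using B_def by blast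
qed

lemma bwd_nonzero:
  assumes nc: "\<not> invertible_elem (a + b)"
  shows "\<not> invertible_elem a" "\<not> invertible_elem b"
proof -
  show "\<not> invertible_elem a"
  proof
    assume ia: "invertible_elem a"
    have "a * b * prod_list (replicate k a) = 0" by (rule HL) auto
    hence "a * (b * a ^ k) = 0" by (simp add: mult.assoc prod_list_replicate)
    hence "b * a ^ k = 0" using zero_left_inv ia by blast
    hence "b = 0" using zero_right_inv inv_power[OF ia] by blast
    then show False using nc ia by simp
  qed
  show "\<not> invertible_elem b"
  proof
    assume ib: "invertible_elem b"
    have "a * b * prod_list (replicate k b) = 0" by (rule HL) auto
    hence "a * b ^ Suc k = 0" by (simp add: mult.assoc prod_list_replicate)
    hence "a = 0" using zero_right_inv inv_power[OF ib] by blast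
    then show False using nc ib by simp
  qed
qed

end


lemma inv_prod_formula:
  fixes w z h :: "'a::complex_banach_algebra_1"
  assumes wz: "w * z = 1" "z * w = 1" and ih: "invertible_elem (1 - h)"
  shows "ainv (w * (1 - h)) = ainv (1 - h) * z"
proof (rule ainv_eq)
  have "w * (1 - h) * (ainv (1 - h) * z) = w * (((1 - h) * ainv (1 - h)) * z)"
    by (simp only: mult.assoc)
  then show "w * (1 - h) * (ainv (1 - h) * z) = 1"
    using ainv(1)[OF ih] wz by simp
  have "ainv (1 - h) * z * (w * (1 - h)) = ainv (1 - h) * ((z * w) * (1 - h))"
    by (simp only: mult.assoc)
  then show "ainv (1 - h) * z * (w * (1 - h)) = 1"
    using ainv(2)[OF ih] wz by simp
qed

lemma psi_cont:
  fixes x :: "'a::complex_banach_algebra_1"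
  assumes all: "\<forall>\<mu>. invertible_elem (1 - cs \<mu> * x)"
  shows "continuous_on UNIV (\<lambda>\<mu>. ainv (1 - cs \<mu> * x))"
  unfolding continuous_on_iff
proof (intro ballI allI impI)
  fix \<mu>0 :: complex and e :: real assume e: "e > 0"
  define z where "z = ainv (1 - cs \<mu>0 * x)"
  have wz: "(1 - cs \<mu>0 * x) * z = 1" "z * (1 - cs \<mu>0 * x) = 1" using ainv all z_def by auto
  define K where "K = norm z * norm x"
  have K0: "K \<ge> 0" unfolding K_def by simp
  define d where "d = min (1 / (2 * (K + 1))) (e / (2 * (K + 1) * (norm z + 1)))"
  have d0: "d > 0" unfolding d_def using K0 e by (simp add: add_nonneg_pos)
  show "\<exists>d>0. \<forall>\<mu>\<in>UNIV. dist \<mu> \<mu>0 < d \<longrightarrow> dist (ainv (1 - cs \<mu> * x)) (ainv (1 - cs \<mu>0 * x)) < e"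
  proof (intro exI conjI ballI impI)
    show "d > 0" by (rule d0)
    fix \<mu> assume "dist \<mu> \<mu>0 < d"
    hence dm: "cmod (\<mu> - \<mu>0) < d" by (simp add: dist_norm)
    define h where "h = z * (cs (\<mu> - \<mu>0) * x)"
    have th: "norm h \<le> (K + 1) * cmod (\<mu> - \<mu>0)"
    proof -
      have n1: "norm (cs (\<mu> - \<mu>0) * x) \<le> cmod (\<mu> - \<mu>0) * norm x"
        using norm_mult_ineq[of "cs (\<mu> - \<mu>0)" x] by simp
      have "norm h \<le> norm z * norm (cs (\<mu> - \<mu>0) * x)" unfolding h_def by (rule norm_mult_ineq)
      also have "\<dots> \<le> norm z * (cmod (\<mu> - \<mu>0) * norm x)" by (rule mult_left_mono[OF n1]) simp
      finally have "norm h \<le> norm z * (cmod (\<mu> - \<mu>0) * norm x)" .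
      also have "\<dots> = K * cmod (\<mu> - \<mu>0)" unfolding K_def by simp
      also have "\<dots> \<le> (K + 1) * cmod (\<mu> - \<mu>0)" by (simp add: mult_right_mono)
      finally show ?thesis .
    qed
    have t1: "(K + 1) * cmod (\<mu> - \<mu>0) < (K + 1) * d" using dm K0 by (intro mult_strict_left_mono) auto
    have "d \<le> 1 / (2 * (K + 1))" unfolding d_def by simp
    hence "(K + 1) * d \<le> (K + 1) * (1 / (2 * (K + 1)))" using K0 by (intro mult_left_mono) auto
    also have "\<dots> = 1 / 2" using K0 by simp
    finally have "(K + 1) * d \<le> 1 / 2" .
    hence hs: "norm h < 1 / 2" using th t1 by linarith
    hence h1: "norm h < 1" by simp
    have "(1 - cs \<mu>0 * x) * (1 - h) = (1 - cs \<mu>0 * x) - ((1 - cs \<mu>0 * x) * z) * (cs (\<mu> - \<mu>0) * x)"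
      unfolding h_def by (simp only: right_diff_distrib mult_1_right mult.assoc)
    also have "\<dots> = 1 - cs \<mu>0 * x - cs (\<mu> - \<mu>0) * x" using wz by simp
    also have "\<dots> = 1 - cs \<mu> * x" by (simp add: cs_diff left_diff_distrib)
    finally have eq: "1 - cs \<mu> * x = (1 - cs \<mu>0 * x) * (1 - h)" by simp
    have "ainv (1 - cs \<mu> * x) = ainv (1 - h) * z"
      unfolding eq by (rule inv_prod_formula[OF wz neumann(1)[OF h1]])
    hence "dist (ainv (1 - cs \<mu> * x)) (ainv (1 - cs \<mu>0 * x)) = norm ((ainv (1 - h) - 1) * z)"
      by (simp add: dist_norm z_def left_diff_distrib)
    also have "\<dots> \<le> norm (ainv (1 - h) - 1) * norm z" by (rule norm_mult_ineq)
    also have "\<dots> \<le> (norm h / (1 - norm h)) * norm z"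
      by (rule mult_right_mono[OF neumann(2)[OF h1]]) simp
    also have "\<dots> \<le> (2 * norm h) * norm z"
    proof (rule mult_right_mono)
      have "norm h / (1 - norm h) \<le> norm h / (1 / 2)"
        by (rule divide_left_mono) (use hs in auto)
      then show "norm h / (1 - norm h) \<le> 2 * norm h" by simp
    qed simp
    also have "\<dots> \<le> 2 * ((K + 1) * cmod (\<mu> - \<mu>0)) * (norm z + 1)"
      using th K0 by (intro mult_mono) auto
    also have "\<dots> < 2 * ((K + 1) * d) * (norm z + 1)"
      using t1 by (intro mult_strict_right_mono) (auto simp: add_nonneg_pos)
    also have "\<dots> \<le> e"
    proof -
      have "d \<le> e / (2 * (K + 1) * (norm z + 1))" unfolding d_def by simp
      hence "d * (2 * (K + 1) * (norm z + 1)) \<le> e" using K0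
        by (simp add: le_divide_eq add_nonneg_pos)
      then show ?thesis by (simp add: algebra_simps)
    qed
    finally show "dist (ainv (1 - cs \<mu> * x)) (ainv (1 - cs \<mu>0 * x)) < e" .
  qed
qed


definition om :: "nat \<Rightarrow> complex" where "om n = exp (2 * of_real pi * \<i> / of_nat n)"

lemma om_pow: "om n ^ m = exp (2 * of_real pi * \<i> * of_nat m / of_nat n)"
  unfolding om_def exp_of_nat_mult[symmetric] by (simp add: field_simps)

lemma om_pow_n: "n \<ge> 1 \<Longrightarrow> om n ^ n = 1"
  unfolding om_pow using complex_root_unity_eq_1[of n n] by simp

lemma norm_om: "cmod (om n) = 1"
  unfolding om_def by (simp add: norm_exp_eq_Re)

lemma om_sum:
  assumes n: "n \<ge> 1" and m: "0 < m" "m < n"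
  shows "(\<Sum>k<n. (om n ^ m) ^ k) = 0"
proof -
  have ne: "om n ^ m \<noteq> 1"
    unfolding om_pow using complex_root_unity_eq_1[of n m] n m by (auto dest: dvd_imp_le)
  have "(om n ^ m) ^ n = 1" by (simp add: power_mult[symmetric] mult.commute[of m] power_mult om_pow_n[OF n])
  then show ?thesis using ne by (simp add: geometric_sum)
qed

lemma cs_pow_mult: "(cs z * (x::'a::complex_banach_algebra_1)) ^ m = cs (z ^ m) * x ^ m"
proof (induction m)
  case (Suc m)
  have "(cs z * x) ^ Suc m = cs z * (x * (cs (z ^ m) * x ^ m))" by (simp add: Suc mult.assoc)
  also have "\<dots> = cs z * cs (z ^ m) * (x * x ^ m)" by (simp only: cs_comm_assoc[of x "z ^ m" "x ^ m"] mult.assoc)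
  also have "\<dots> = cs (z ^ Suc m) * x ^ Suc m" by (simp add: cs_mult)
  finally show ?case .
qed simp

lemma avg_identity:
  fixes x :: "'a::complex_banach_algebra_1" and \<mu> :: complex
  assumes all: "\<forall>\<mu>. invertible_elem (1 - cs \<mu> * x)" and n: "n \<ge> 1"
  defines "M \<equiv> cs (1 / of_nat n) * (\<Sum>k<n. ainv (1 - cs (om n ^ k * \<mu>) * x))"
  shows "M * (1 - cs (\<mu> ^ n) * x ^ n) = 1" "(1 - cs (\<mu> ^ n) * x ^ n) * M = 1"
proof -
  define S where "S k = (\<Sum>m<n. cs ((om n ^ k * \<mu>) ^ m) * x ^ m)" for k
  have un: "(cs (om n ^ k * \<mu>) * x) ^ n = cs (\<mu> ^ n) * x ^ n" for k
  proof -
    have "(om n ^ k * \<mu>) ^ n = \<mu> ^ n"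
      by (simp add: power_mult_distrib power_mult[symmetric] mult.commute[of k] power_mult om_pow_n[OF n])
    then show ?thesis by (simp add: cs_pow_mult)
  qed
  have L: "ainv (1 - cs (om n ^ k * \<mu>) * x) * (1 - cs (\<mu> ^ n) * x ^ n) = S k" for k
  proof -
    let ?u = "cs (om n ^ k * \<mu>) * x"
    have g: "(1 - ?u) * (\<Sum>m<n. ?u ^ m) = 1 - cs (\<mu> ^ n) * x ^ n" using geo_left[of ?u n] un by simp
    have "ainv (1 - ?u) * (1 - cs (\<mu> ^ n) * x ^ n) = (ainv (1 - ?u) * (1 - ?u)) * (\<Sum>m<n. ?u ^ m)"
      unfolding g[symmetric] by (simp only: mult.assoc)
    also have "\<dots> = (\<Sum>m<n. ?u ^ m)"
    proof -
      have "ainv (1 - ?u) * (1 - ?u) = 1" using ainv(2) all by blast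
      then show ?thesis by simp
    qed
    finally show ?thesis unfolding S_def by (simp add: cs_pow_mult)
  qed
  have R: "(1 - cs (\<mu> ^ n) * x ^ n) * ainv (1 - cs (om n ^ k * \<mu>) * x) = S k" for k
  proof -
    let ?u = "cs (om n ^ k * \<mu>) * x"
    have g: "(\<Sum>m<n. ?u ^ m) * (1 - ?u) = 1 - cs (\<mu> ^ n) * x ^ n" using geo_right[of ?u n] un by simp
    have "(1 - cs (\<mu> ^ n) * x ^ n) * ainv (1 - ?u) = (\<Sum>m<n. ?u ^ m) * ((1 - ?u) * ainv (1 - ?u))"
      unfolding g[symmetric] by (simp only: mult.assoc)
    also have "\<dots> = (\<Sum>m<n. ?u ^ m)"
    proof -
      have "(1 - ?u) * ainv (1 - ?u) = 1" using ainv(1) all by blast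
      then show ?thesis by simp
    qed
    finally show ?thesis unfolding S_def by (simp add: cs_pow_mult)
  qed
  have SS: "(\<Sum>k<n. S k) = of_nat n"
  proof -
    have "(\<Sum>k<n. S k) = (\<Sum>m<n. \<Sum>k<n. cs ((om n ^ k * \<mu>) ^ m) * x ^ m)"
      unfolding S_def by (rule sum.swap)
    also have "\<dots> = (\<Sum>m<n. cs (\<Sum>k<n. (om n ^ k * \<mu>) ^ m) * x ^ m)"
      by (simp add: cs_sum sum_distrib_right)
    also have "\<dots> = (\<Sum>m<n. if m = 0 then of_nat n else 0)"
    proof (rule sum.cong[OF refl])
      fix m assume "m \<in> {..<n}"
      hence mn: "m < n" by simp
      have e: "(\<Sum>k<n. (om n ^ k * \<mu>) ^ m) = \<mu> ^ m * (\<Sum>k<n. (om n ^ m) ^ k)"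
        by (simp add: sum_distrib_left power_mult_distrib power_mult[symmetric] mult.commute)
      show "cs (\<Sum>k<n. (om n ^ k * \<mu>) ^ m) * x ^ m = (if m = 0 then of_nat n else 0)"
      proof (cases "m = 0")
        case True then show ?thesis by (simp add: cs_of_nat)
      next
        case False then show ?thesis unfolding e using om_sum[OF n _ mn] by simp
      qed
    qed
    also have "\<dots> = of_nat n" using n by (simp add: sum.delta)
    finally show ?thesis .
  qed
  have cn: "cs (1 / of_nat n) * (of_nat n :: 'a) = 1"
    using n by (simp add: cs_of_nat[symmetric] cs_mult[symmetric])
  show "M * (1 - cs (\<mu> ^ n) * x ^ n) = 1"
    unfolding M_def mult.assoc sum_distrib_right L SS by (rule cn)
  have "(1 - cs (\<mu> ^ n) * x ^ n) * M = cs (1 / of_nat n) * ((1 - cs (\<mu> ^ n) * x ^ n) * (\<Sum>k<n. ainv (1 - cs (om n ^ k * \<mu>) * x)))"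
    unfolding M_def by (rule cs_comm_assoc)
  also have "\<dots> = 1" unfolding sum_distrib_left R SS by (rule cn)
  finally show "(1 - cs (\<mu> ^ n) * x ^ n) * M = 1" .
qed


lemma norm_cs_mult: "norm (cs c * (y::'a::complex_banach_algebra_1)) = cmod c * norm y"
  by (simp add: scaleC_cs[symmetric] norm_scaleC)

lemma rickart_step:
  fixes x :: "'a::complex_banach_algebra_1"
  assumes all: "\<forall>\<mu>. invertible_elem (1 - cs \<mu> * x)"
    and del: "\<And>\<mu> \<mu>'. \<mu> \<in> cball 0 2 \<Longrightarrow> \<mu>' \<in> cball 0 2 \<Longrightarrow> dist \<mu>' \<mu> < \<delta> \<Longrightarrow>
          dist (ainv (1 - cs \<mu>' * x)) (ainv (1 - cs \<mu> * x)) < 1/4"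
    and r: "0 \<le> \<rho>" "\<rho> \<le> 2" and good: "(\<lambda>n. \<rho> ^ n * norm (x ^ n)) \<longlonglongrightarrow> 0"
    and r': "0 \<le> \<rho>'" "\<rho>' \<le> 2" "\<bar>\<rho>' - \<rho>\<bar> < \<delta>"
    and r'': "0 \<le> \<rho>''" "\<rho>'' < \<rho>'"
  shows "(\<lambda>n. \<rho>'' ^ n * norm (x ^ n)) \<longlonglongrightarrow> 0"
proof -
  define M where "M n t = cs (1 / of_nat n) * (\<Sum>k<n. ainv (1 - cs (om n ^ k * t) * x))" for n t
  have Mi: "M n t * (1 - cs (t ^ n) * x ^ n) = 1" "(1 - cs (t ^ n) * x ^ n) * M n t = 1"
    if "n \<ge> 1" for n t
    using avg_identity[OF all that, of t] unfolding M_def by auto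
  have Mdiff: "norm (M n (of_real \<rho>') - M n (of_real \<rho>)) \<le> 1/4" if n: "n \<ge> 1" for n
  proof -
    have "M n (of_real \<rho>') - M n (of_real \<rho>) = cs (1 / of_nat n) *
      (\<Sum>k<n. ainv (1 - cs (om n ^ k * of_real \<rho>') * x) - ainv (1 - cs (om n ^ k * of_real \<rho>) * x))"
      unfolding M_def by (simp add: sum_subtractf right_diff_distrib)
    hence "norm (M n (of_real \<rho>') - M n (of_real \<rho>)) = (1 / real n) *
      norm (\<Sum>k<n. ainv (1 - cs (om n ^ k * of_real \<rho>') * x) - ainv (1 - cs (om n ^ k * of_real \<rho>) * x))"
      by (simp add: norm_cs_mult norm_divide)
    also have "\<dots> \<le> (1 / real n) * (\<Sum>k<n. norm (ainv (1 - cs (om n ^ k * of_real \<rho>') * x) - ainv (1 - cs (om n ^ k * of_real \<rho>) * x)))"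
      by (intro mult_left_mono norm_sum) simp
    also have "\<dots> \<le> (1 / real n) * (\<Sum>k<n. 1/4)"
    proof (intro mult_left_mono sum_mono less_imp_le)
      fix k assume "k \<in> {..<n}"
      have nk: "cmod (om n ^ k) = 1" by (simp add: norm_power norm_om)
      have "dist (ainv (1 - cs (om n ^ k * of_real \<rho>') * x)) (ainv (1 - cs (om n ^ k * of_real \<rho>) * x)) < 1/4"
      proof (rule del)
        show "om n ^ k * complex_of_real \<rho> \<in> cball 0 2" using r nk by (simp add: norm_mult)
        show "om n ^ k * complex_of_real \<rho>' \<in> cball 0 2" using r' nk by (simp add: norm_mult)
        have "dist (om n ^ k * complex_of_real \<rho>') (om n ^ k * complex_of_real \<rho>) = cmod (om n ^ k) * \<bar>\<rho>' - \<rho>\<bar>"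
          by (simp add: dist_norm right_diff_distrib[symmetric] norm_mult of_real_diff[symmetric] del: of_real_diff)
        then show "dist (om n ^ k * complex_of_real \<rho>') (om n ^ k * complex_of_real \<rho>) < \<delta>" using nk r' by simp
      qed
      then show "norm (ainv (1 - cs (om n ^ k * of_real \<rho>') * x) - ainv (1 - cs (om n ^ k * of_real \<rho>) * x)) < 1/4"
        by (simp add: dist_norm)
    qed (use n in simp)
    also have "\<dots> = 1/4" using n by simp
    finally show ?thesis .
  qed
  have ev1: "eventually (\<lambda>n. \<rho> ^ n * norm (x ^ n) < 1/5) sequentially"
    using order_tendstoD(2)[OF good, of "1/5"] by simp
  have ev2: "eventually (\<lambda>n. \<rho>' ^ n * norm (x ^ n) \<le> 1) sequentially"
    using ev1 eventually_ge_at_top[of 1]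
  proof eventually_elim
    case (elim n)
    define h where "h = cs (of_real \<rho> ^ n) * x ^ n"
    have nh: "norm h = \<rho> ^ n * norm (x ^ n)" unfolding h_def using r
      by (simp add: norm_cs_mult norm_power)
    have h1: "norm h < 1" using nh elim by simp
    have "ainv (1 - h) = M n (of_real \<rho>)" using ainv_eq[OF Mi(2) Mi(1)] elim unfolding h_def by simp
    hence "norm (M n (of_real \<rho>) - 1) \<le> norm h / (1 - norm h)" using neumann(2)[OF h1] by simp
    also have "\<dots> \<le> (1/5) / (1 - 1/5)" using nh elim
      by (intro frac_le) auto
    finally have a1: "norm (M n (of_real \<rho>) - 1) \<le> 1/4" by simp
    define g where "g = 1 - M n (of_real \<rho>')"
    have "g = (M n (of_real \<rho>) - M n (of_real \<rho>')) + (1 - M n (of_real \<rho>))" by (simp add: g_def)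
    hence "norm g \<le> norm (M n (of_real \<rho>) - M n (of_real \<rho>')) + norm (1 - M n (of_real \<rho>))"
      by (simp only:) (rule norm_triangle_ineq)
    hence "norm g \<le> norm (M n (of_real \<rho>') - M n (of_real \<rho>)) + norm (M n (of_real \<rho>) - 1)"
      by (simp only: norm_minus_commute)
    hence gs: "norm g \<le> 1/2" using Mdiff[OF elim(2)] a1 by simp
    hence g1: "norm g < 1" by simp
    have "ainv (1 - g) = 1 - cs (of_real \<rho>' ^ n) * x ^ n"
      unfolding g_def using ainv_eq[OF Mi(1) Mi(2)] elim by simp
    hence "norm ((1 - cs (of_real \<rho>' ^ n) * x ^ n) - 1) \<le> norm g / (1 - norm g)"
      using neumann(2)[OF g1] by simp
    also have "\<dots> \<le> (1/2) / (1 - 1/2)" using gs by (intro frac_le) auto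
    finally show ?case using r' by (simp add: norm_cs_mult norm_power)
  qed
  have rp: "\<rho>' > 0" using r'' by simp
  have q: "\<rho>'' / \<rho>' < 1" "0 \<le> \<rho>'' / \<rho>'" using r'' rp by auto
  have lim: "(\<lambda>n. (\<rho>'' / \<rho>') ^ n) \<longlonglongrightarrow> 0" by (rule LIMSEQ_power_zero) (use q in simp)
  show ?thesis
  proof (rule Lim_null_comparison[OF _ lim])
    show "eventually (\<lambda>n. norm (\<rho>'' ^ n * norm (x ^ n)) \<le> (\<rho>'' / \<rho>') ^ n) sequentially"
      using ev2
    proof eventually_elim
      case (elim n)
      have "norm (\<rho>'' ^ n * norm (x ^ n)) = (\<rho>'' / \<rho>') ^ n * (\<rho>' ^ n * norm (x ^ n))"
        using rp r'' by (simp add: power_divide abs_mult)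
      also have "\<dots> \<le> (\<rho>'' / \<rho>') ^ n * 1" using elim q by (intro mult_left_mono) auto
      finally show ?case by simp
    qed
  qed
qed


lemma rickart:
  fixes x :: "'a::complex_banach_algebra_1"
  assumes all: "\<forall>\<mu>. invertible_elem (1 - cs \<mu> * x)"
  shows "(\<lambda>n. norm (x ^ n)) \<longlonglongrightarrow> 0"
proof -
  have "continuous_on (cball 0 2) (\<lambda>\<mu>. ainv (1 - cs \<mu> * x))"
    using psi_cont[OF all] continuous_on_subset by blast
  hence "uniformly_continuous_on (cball 0 2) (\<lambda>\<mu>. ainv (1 - cs \<mu> * x))"
    by (rule compact_uniformly_continuous) simp
  then obtain \<delta> where d0: "\<delta> > 0" and del: "\<And>\<mu> \<mu>'. \<mu> \<in> cball 0 2 \<Longrightarrow> \<mu>' \<in> cball 0 2 \<Longrightarrow> dist \<mu>' \<mu> < \<delta> \<Longrightarrow>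
          dist (ainv (1 - cs \<mu>' * x)) (ainv (1 - cs \<mu> * x)) < 1/4"
    unfolding uniformly_continuous_on_def by (metis divide_pos_pos zero_less_numeral zero_less_one)
  define good where "good \<rho> \<longleftrightarrow> (\<lambda>n. \<rho> ^ n * norm (x ^ n)) \<longlonglongrightarrow> 0" for \<rho> :: real
  have step: "good \<rho>''" if "0 \<le> \<rho>" "\<rho> \<le> 2" "good \<rho>" "0 \<le> \<rho>'" "\<rho>' \<le> 2" "\<bar>\<rho>' - \<rho>\<bar> < \<delta>"
      "0 \<le> \<rho>''" "\<rho>'' < \<rho>'" for \<rho> \<rho>' \<rho>''
    unfolding good_def
    by (rule rickart_step[where \<delta>=\<delta> and \<rho>=\<rho> and \<rho>'=\<rho>' and \<rho>''=\<rho>'', OF all del])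
       (use that in \<open>auto simp: good_def\<close>)
  have g0: "good 0" unfolding good_def
  proof (rule Lim_null_comparison)
    show "(\<lambda>n. (0::real) ^ n) \<longlonglongrightarrow> 0" by (rule LIMSEQ_power_zero) simp
    show "\<forall>\<^sub>F n in sequentially. norm (0 ^ n * norm (x ^ n)) \<le> (0::real) ^ n"
      by (rule always_eventually) (auto simp: power_0_left)
  qed
  have gm: "good (min 1 (real m * \<delta> / 2))" for m
  proof (induction m)
    case 0 then show ?case using g0 by simp
  next
    case (Suc m)
    show ?case
    proof (cases "real m * \<delta> / 2 \<ge> 1")
      case True
      hence "real (Suc m) * \<delta> / 2 \<ge> 1" using d0 by (simp add: algebra_simps)
      then show ?thesis using Suc True by simp
    next
      case False
      define \<rho> where "\<rho> = real m * \<delta> / 2"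
      have "0 \<le> real m * \<delta>" using d0 by simp
      hence r1: "\<rho> < 1" "0 \<le> \<rho>" using False \<rho>_def by simp_all
      have gr: "good \<rho>" using Suc.IH r1(1) unfolding \<rho>_def by (simp add: min_def)
      define \<rho>' where "\<rho>' = min 2 (\<rho> + 3 * \<delta> / 4)"
      show ?thesis
      proof (rule step[OF r1(2) _ gr, of \<rho>'])
        show "\<rho> \<le> 2" using r1 by simp
        show "0 \<le> \<rho>'" "\<rho>' \<le> 2" using r1 d0 \<rho>'_def by auto
        show "\<bar>\<rho>' - \<rho>\<bar> < \<delta>" using r1 d0 \<rho>'_def by (auto simp: min_def)
        show "0 \<le> min 1 (real (Suc m) * \<delta> / 2)" using d0 by simp
        have "real (Suc m) * \<delta> / 2 = \<rho> + \<delta> / 2" using \<rho>_def by (simp add: algebra_simps)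
        then show "min 1 (real (Suc m) * \<delta> / 2) < \<rho>'" using r1 d0 \<rho>'_def by (auto simp: min_def)
      qed
    qed
  qed
  obtain m :: nat where "real m \<ge> 2 / \<delta>" using real_arch_simple by blast
  hence "real m * \<delta> / 2 \<ge> 1" using d0 by (simp add: field_simps)
  hence "good 1" using gm[of m] by simp
  then show ?thesis unfolding good_def by simp
qed

lemma gelfand:
  fixes x :: "'a::complex_banach_algebra_1"
  assumes ix: "invertible_elem x" and all: "\<forall>\<mu>. invertible_elem (1 - cs \<mu> * x)"
  shows False
proof -
  define y where "y = ainv x"
  have xy: "x * y = 1" "y * x = 1" using ainv[OF ix] y_def by auto
  have iy: "invertible_elem y" unfolding invertible_elem_def using xy by auto
  have ally: "\<forall>\<mu>. invertible_elem (1 - cs \<mu> * y)"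
  proof
    fix \<mu> :: complex
    show "invertible_elem (1 - cs \<mu> * y)"
    proof (cases "\<mu> = 0")
      case True then show ?thesis by simp
    next
      case False
      have "cs (- \<mu>) * (y * (1 - cs (1 / \<mu>) * x)) = cs (- \<mu>) * (y - cs (1 / \<mu>))"
        by (simp add: right_diff_distrib cs_comm_assoc xy)
      also have "\<dots> = 1 - cs \<mu> * y"
        using False by (simp add: right_diff_distrib cs_mult[symmetric] cs_minus)
      finally have e: "cs (- \<mu>) * (y * (1 - cs (1 / \<mu>) * x)) = 1 - cs \<mu> * y" .
      have "invertible_elem (cs (- \<mu>) * (y * (1 - cs (1 / \<mu>) * x)))"
        using False all iy by (intro inv_mult inv_cs) auto
      then show ?thesis using e by simp
    qed
  qed
  have pw: "x ^ n * y ^ n = 1" for n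
  proof (induction n)
    case (Suc n)
    have "x ^ Suc n * y ^ Suc n = x ^ n * ((x * y) * y ^ n)"
      by (simp only: power_Suc2[of x n] power_Suc[of y n] mult.assoc)
    then show ?case using Suc xy by simp
  qed simp
  have "(\<lambda>n. norm (x ^ n) * norm (y ^ n)) \<longlonglongrightarrow> 0"
    using tendsto_mult[OF rickart[OF all] rickart[OF ally]] by simp
  hence "eventually (\<lambda>n. norm (x ^ n) * norm (y ^ n) < 1) sequentially"
    using order_tendstoD(2) by fastforce
  then obtain n where "norm (x ^ n) * norm (y ^ n) < 1" by (auto simp: eventually_sequentially)
  moreover have "1 \<le> norm (x ^ n) * norm (y ^ n)"
    using norm_mult_ineq[of "x ^ n" "y ^ n"] pw[of n] by simp
  ultimately show False by simp
qed


theorem lemma3p1: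
  fixes a b :: "'a::complex_banach_algebra_1" and k :: nat
  assumes "k \<ge> 1"
    and "\<forall>\<alpha>::nat \<Rightarrow> 'a. (\<forall>i\<in>{1..k}. \<alpha> i \<in> {a, b}) \<longrightarrow>
           a * b * (\<Prod>i\<leftarrow>[1..<k+1]. \<alpha> i) = 0"
  shows "(quasinilpotent a \<and> quasinilpotent b) \<longleftrightarrow> quasinilpotent (a + b)"
proof -
  have HL: "a * b * prod_list ws = 0" if "set ws \<subseteq> {a, b}" "k \<le> length ws" for ws
    using hyp_HL[OF assms(2) that] .
  interpret W: wrd a b k by unfold_locales (rule HL)
  show ?thesis
  proof
    assume "quasinilpotent a \<and> quasinilpotent b"
    hence alla: "\<forall>\<mu>. invertible_elem (1 - cs \<mu> * a)" and allb: "\<forall>\<mu>. invertible_elem (1 - cs \<mu> * b)"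
      by (simp_all add: quasinilpotent_iff)
    have allc: "\<forall>\<mu>. invertible_elem (1 - cs \<mu> * (a + b))"
      using W.fwd_mu alla allb by blast
    have "\<not> invertible_elem (a + b)" using gelfand allc by blast
    then show "quasinilpotent (a + b)" using allc by (simp add: quasinilpotent_iff)
  next
    assume "quasinilpotent (a + b)"
    hence nc: "\<not> invertible_elem (a + b)" and allc: "\<forall>\<mu>. invertible_elem (1 - cs \<mu> * (a + b))"
      by (simp_all add: quasinilpotent_iff)
    have "\<forall>\<mu>. invertible_elem (1 - cs \<mu> * a)"
    proof
      fix \<mu> :: complex
      show "invertible_elem (1 - cs \<mu> * a)"
        by (rule one_sided_all_inv) (use W.bwd_mu(1) allc in blast)
    qed
    moreover have "\<forall>\<mu>. invertible_elem (1 - cs \<mu> * b)"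
    proof
      fix \<mu> :: complex
      show "invertible_elem (1 - cs \<mu> * b)"
        by (rule one_sided_all_inv) (use W.bwd_mu(2) allc in blast)
    qed
    ultimately show "quasinilpotent a \<and> quasinilpotent b"
      using W.bwd_nonzero[OF nc] by (simp add: quasinilpotent_iff)
  qed
qed

end
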